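(* Let $f$ be a $2\pi$-periodic continuous function with modulus of continuity $\omega(t)$, and let $A=(a_{n,k})$ be a lower triangular infinite matrix of real numbers ($a_{n,k}=0$ for $k>n$) with $a_{n,k}\ge 0$ and $\sum_{k=0}^n a_{n,k}=1$ for all $n$. Let $\beta\ge0$ and suppose \[ \sum_{k=0}^{m-1}(k+1)^{\beta}\left|\frac{a_{n,k}}{(k+1)^{\beta}}-\frac{a_{n,k+1}}{(k+2)^{\beta}}\right|=\mathcal{O}(a_{n,m}) \] for all $m=0,1,\dots,n$ and $n=0,1,\dots$. Suppose there is a function $H(u)\ge0$ such that $\int_u^{\pi} t^{-2}\omega(t)\,dt=\mathcal{O}(H(u))$ as $u\to+0$. Then \[ \|T_{n,A}(f)-f\|=\mathcal{O}\left(\omega\left(\frac{\pi}{n+1}\right)+a_{n,n}H\left(\frac{\pi}{n+1}\right)\right). \] If, in addition, $\int_0^{t}H(u)\,du=\mathcal{O}(tH(t))$ as $t\to+0$, then \[ \|T_{n,A}(f)-f\|=\mathcal{O}\left(a_{n,n}H\left(\frac{\pi}{n+1}\right)\right). \]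
   Context: $S_k(f;x)$ is the $k$-th partial sum of the Fourier series of $f$ at $x$, and $T_{n,A}(f;x):=\sum_{k=0}^n a_{n,k}S_k(f;x)$. $\|\cdot\|$ is the sup-norm. $\omega(\delta)=\sup_{|h|\le\delta}\sup_x|f(x+h)-f(x)|$. The notation $u=\mathcal{O}(v)$ means $u\le Cv$ for a positive constant $C$ (independent of $n$). *)

theory Defs
  imports "HOL-Analysis.Analysis"
begin

definition fourier_a :: "(real \<Rightarrow> real) \<Rightarrow> nat \<Rightarrow> real" where
  "fourier_a f j = (1 / pi) * integral {-pi..pi} (\<lambda>t. f t * cos (real j * t))"

definition fourier_b :: "(real \<Rightarrow> real) \<Rightarrow> nat \<Rightarrow> real" where
  "fourier_b f j = (1 / pi) * integral {-pi..pi} (\<lambda>t. f t * sin (real j * t))"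

definition fourier_partial_sum :: "(real \<Rightarrow> real) \<Rightarrow> nat \<Rightarrow> real \<Rightarrow> real" where
  "fourier_partial_sum f k x = fourier_a f 0 / 2 +
     (\<Sum>j=1..k. fourier_a f j * cos (real j * x) + fourier_b f j * sin (real j * x))"

definition matrix_mean :: "(nat \<Rightarrow> nat \<Rightarrow> real) \<Rightarrow> (real \<Rightarrow> real) \<Rightarrow> nat \<Rightarrow> real \<Rightarrow> real" where
  "matrix_mean A f n x = (\<Sum>k=0..n. A n k * fourier_partial_sum f k x)"

definition sup_norm :: "(real \<Rightarrow> real) \<Rightarrow> real" where
  "sup_norm g = (SUP x. \<bar>g x\<bar>)"

definition modulus_of_continuity :: "(real \<Rightarrow> real) \<Rightarrow> real \<Rightarrow> real" where
  "modulus_of_continuity f \<delta> = (SUP p \<in> {p :: real \<times> real. \<bar>snd p\<bar> \<le> \<delta>}. \<bar>f (fst p + snd p) - f (fst p)\<bar>)"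

end

theory Submission
  imports Defs
begin


lemma sin_half_ge:
  fixes s :: real assumes "0 \<le> s" "s \<le> pi"
  shows "s / 6 \<le> sin (s / 2)"
proof -
  define y where "y = s / 2"
  have y0: "0 \<le> y" and y1: "y \<le> pi / 2" using assms by (auto simp: y_def)
  have "\<bar>sin y - y\<bar> * 6 \<le> y * (y * y)"
    using Maclaurin_sin_bound[of y 3] y0 by (simp add: sin_coeff_def numeral_eq_Suc eval_nat_numeral)
  moreover have "- (sin y - y) \<le> \<bar>sin y - y\<bar>" by simp
  ultimately have a: "y - y * (y * y) / 6 \<le> sin y" by argo
  have "y * y \<le> 4"
  proof -
    have "y \<le> 2" using y1 pi_less_4 by linarith
    hence "y * y \<le> 2 * 2" using y0 by (intro mult_mono) auto
    thus ?thesis by simp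
  qed
  hence "y * (y * y) \<le> y * 4" using y0 by (simp add: mult_left_mono)
  with a show ?thesis unfolding y_def by argo
qed



lemma periodic_int:
  fixes g :: "real \<Rightarrow> 'a"
  assumes per: "\<And>x. g (x + 2 * pi) = g x"
  shows "g (x + 2 * pi * real_of_int m) = g x"
proof -
  have nat: "g (y + 2 * pi * real k) = g y" for y k
  proof (induction k)
    case (Suc k)
    have "g (y + 2 * pi * real (Suc k)) = g ((y + 2 * pi * real k) + 2 * pi)"
      by (simp add: algebra_simps)
    also have "\<dots> = g y" using per Suc by simp
    finally show ?case .
  qed simp
  show ?thesis
  proof (cases "m \<ge> 0")
    case True
    define k where "k = nat m"
    have "m = int k" using True by (simp add: k_def)
    thus ?thesis using nat by simp
  next
    case False
    define k where "k = nat (- m)"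
    have k: "m = - int k" using False by (simp add: k_def)
    have "g x = g ((x + 2 * pi * real_of_int m) + 2 * pi * real k)"
      by (simp add: k algebra_simps)
    also have "\<dots> = g (x + 2 * pi * real_of_int m)" using nat by simp
    finally show ?thesis by simp
  qed
qed



lemma periodic_reduce:
  fixes c :: real
  obtains c0 m where "0 \<le> c0" "c0 \<le> 2 * pi" "c = c0 + 2 * pi * real_of_int m"
proof -
  define m where "m = floor (c / (2 * pi))"
  define c0 where "c0 = c - 2 * pi * real_of_int m"
  have "real_of_int m \<le> c / (2*pi)" "c / (2*pi) < real_of_int m + 1"
    unfolding m_def by linarith+
  hence "2*pi*real_of_int m \<le> c" "c < 2*pi*(real_of_int m + 1)"
    using pi_gt_zero by (simp_all add: field_simps)
  hence "0 \<le> c0" "c0 \<le> 2 * pi" unfolding c0_def by (auto simp: algebra_simps)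
  thus ?thesis using that[of c0 m] unfolding c0_def by auto
qed



lemma periodic_bounded:
  fixes g :: "real \<Rightarrow> real"
  assumes cont: "continuous_on UNIV g" and per: "\<And>x. g (x + 2 * pi) = g x"
  obtains B where "\<And>x. \<bar>g x\<bar> \<le> B"
proof -
  have "compact (g ` {0..2*pi})"
    by (rule compact_continuous_image) (auto intro: continuous_on_subset[OF cont])
  then obtain B where B: "\<And>y. y \<in> g ` {0..2*pi} \<Longrightarrow> norm y \<le> B"
    using compact_imp_bounded bounded_iff by metis
  have "\<bar>g x\<bar> \<le> B" for x
  proof -
    obtain c0 m where c0: "0 \<le> c0" "c0 \<le> 2 * pi" "x = c0 + 2 * pi * real_of_int m"
      using periodic_reduce by blast
    have "g x = g c0" using c0(3) periodic_int[of g c0 m, OF per] by simp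
    thus ?thesis using B[of "g c0"] c0 by auto
  qed
  thus ?thesis using that by blast
qed





lemma om_bdd:
  fixes f :: "real \<Rightarrow> real"
  assumes B: "\<And>x. \<bar>f x\<bar> \<le> B"
  shows "bdd_above ((\<lambda>p. \<bar>f (fst p + snd p) - f (fst p)\<bar>) ` {p :: real \<times> real. \<bar>snd p\<bar> \<le> d})"
proof (rule bdd_aboveI2)
  fix p show "\<bar>f (fst p + snd p) - f (fst p)\<bar> \<le> 2 * B"
    using B[of "fst p + snd p"] B[of "fst p"] by linarith
qed

lemma om_ge:
  fixes f :: "real \<Rightarrow> real"
  assumes B: "\<And>x. \<bar>f x\<bar> \<le> B" and h: "\<bar>h\<bar> \<le> d"
  shows "\<bar>f (y + h) - f y\<bar> \<le> modulus_of_continuity f d"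
proof -
  have "\<bar>f (fst (y,h) + snd (y,h)) - f (fst (y,h))\<bar> \<le> modulus_of_continuity f d"
    unfolding modulus_of_continuity_def
    by (rule cSUP_upper[OF _ om_bdd[OF B]]) (use h in auto)
  thus ?thesis by simp
qed

lemma om_nonneg:
  fixes f :: "real \<Rightarrow> real"
  assumes B: "\<And>x. \<bar>f x\<bar> \<le> B" and d: "0 \<le> d"
  shows "0 \<le> modulus_of_continuity f d"
  using om_ge[where f=f, OF B, where h=0 and d=d and y=0] d by simp

lemma om_least:
  fixes f :: "real \<Rightarrow> real"
  assumes d: "0 \<le> d" and le: "\<And>x h. \<bar>h\<bar> \<le> d \<Longrightarrow> \<bar>f (x + h) - f x\<bar> \<le> M"
  shows "modulus_of_continuity f d \<le> M"
  unfolding modulus_of_continuity_def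
proof (rule cSUP_least)
  show "{p :: real \<times> real. \<bar>snd p\<bar> \<le> d} \<noteq> {}" using d by (auto intro!: exI[of _ 0])
  fix p :: "real \<times> real" assume "p \<in> {p. \<bar>snd p\<bar> \<le> d}"
  thus "\<bar>f (fst p + snd p) - f (fst p)\<bar> \<le> M" using le by auto
qed

lemma om_mono:
  fixes f :: "real \<Rightarrow> real"
  assumes B: "\<And>x. \<bar>f x\<bar> \<le> B" and d: "0 \<le> d" "d \<le> d'"
  shows "modulus_of_continuity f d \<le> modulus_of_continuity f d'"
  by (rule om_least[OF d(1)]) (rule om_ge[where f=f, OF B], use d in auto)

lemma om_mult:
  fixes f :: "real \<Rightarrow> real"
  assumes B: "\<And>x. \<bar>f x\<bar> \<le> B" and d: "0 \<le> d"
  shows "modulus_of_continuity f (real m * d) \<le> real m * modulus_of_continuity f d"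
proof (rule om_least)
  show "0 \<le> real m * d" using d by simp
  fix x h :: real assume h: "\<bar>h\<bar> \<le> real m * d"
  show "\<bar>f (x + h) - f x\<bar> \<le> real m * modulus_of_continuity f d"
  proof (cases "m = 0")
    case True thus ?thesis using h by simp
  next
    case False
    define e where "e = h / real m"
    have e: "\<bar>e\<bar> \<le> d" using h False by (simp add: e_def abs_divide field_simps)
    have "f (x + h) - f x = (\<Sum>i<m. f (x + real (Suc i) * e) - f (x + real i * e))"
      by (subst sum_lessThan_telescope) (use False in \<open>simp add: e_def\<close>)
    also have "\<bar>\<dots>\<bar> \<le> (\<Sum>i<m. \<bar>f (x + real (Suc i) * e) - f (x + real i * e)\<bar>)"
      by (rule sum_abs)
    also have "\<dots> \<le> (\<Sum>i<m. modulus_of_continuity f d)"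
    proof (rule sum_mono)
      fix i
      have eq: "x + real (Suc i) * e = (x + real i * e) + e" by (simp add: algebra_simps)
      have "\<bar>f ((x + real i * e) + e) - f (x + real i * e)\<bar> \<le> modulus_of_continuity f d"
        by (rule om_ge[where f=f, OF B e])
      thus "\<bar>f (x + real (Suc i) * e) - f (x + real i * e)\<bar> \<le> modulus_of_continuity f d"
        by (simp only: eq)
    qed
    finally show ?thesis by simp
  qed
qed




lemma integral_shift_cont:
  fixes g :: "real \<Rightarrow> real"
  assumes cont: "continuous_on UNIV g" and ab: "a \<le> b"
  shows "integral {a..b} (\<lambda>s. g (c + s)) = integral {a+c..b+c} g"
proof -
  have "(g has_integral integral {a+c..b+c} g) {a+c..b+c}"
    by (rule integrable_integral, rule integrable_continuous_interval, rule continuous_on_subset[OF cont]) auto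
  hence "(g has_integral integral {a+c..b+c} g) (cbox (a+c) (b+c))" by (simp add: cbox_interval)
  from has_integral_affinity[OF this, of 1 c]
  have "((\<lambda>x. g (x + c)) has_integral integral {a+c..b+c} g) ((\<lambda>x. x - c) ` {a+c..b+c})"
    by simp
  moreover have "(\<lambda>x. x - c) ` cbox (a+c) (b+c) = {a..b}"
    using ab by (auto simp: image_iff intro!: bexI[where x="_ + c"])
  ultimately have "((\<lambda>x. g (x + c)) has_integral integral {a+c..b+c} g) {a..b}" by simp
  thus ?thesis by (simp add: add.commute integral_unique)
qed

lemma integral_periodic_shift:
  fixes g :: "real \<Rightarrow> real"
  assumes cont: "continuous_on UNIV g" and per: "\<And>x. g (x + 2 * pi) = g x"
  shows "integral {-pi..pi} (\<lambda>s. g (c + s)) = integral {-pi..pi} g"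
proof -
  obtain c0 m where c0: "0 \<le> c0" "c0 \<le> 2 * pi" "c = c0 + 2 * pi * real_of_int m"
    using periodic_reduce by blast
  have gc: "g (c + s) = g (c0 + s)" for s
    using periodic_int[of g "c0 + s" m, OF per] c0(3) by (simp add: algebra_simps)
  have int: "g integrable_on {a..b}" for a b
    by (rule integrable_continuous_interval, rule continuous_on_subset[OF cont]) auto
  have "integral {-pi..pi} (\<lambda>s. g (c + s)) = integral {-pi..pi} (\<lambda>s. g (c0 + s))"
    by (simp add: gc)
  also have "\<dots> = integral {-pi+c0..pi+c0} g"
    by (rule integral_shift_cont[OF cont]) simp
  also have "\<dots> = integral {-pi+c0..pi} g + integral {pi..pi+c0} g"
    by (rule Henstock_Kurzweil_Integration.integral_combine[symmetric]) (use c0 int in auto)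
  also have "integral {pi..pi+c0} g = integral {-pi..-pi+c0} g"
  proof -
    have "integral {-pi..-pi+c0} (\<lambda>s. g (2*pi + s)) = integral {-pi + 2*pi..-pi+c0 + 2*pi} g"
      by (rule integral_shift_cont[OF cont]) (use c0 in auto)
    moreover have "(\<lambda>s. g (2*pi + s)) = g" using per by (auto simp: add.commute)
    ultimately show ?thesis by (simp add: algebra_simps)
  qed
  also have "integral {-pi+c0..pi} g + integral {-pi..-pi+c0} g = integral {-pi..pi} g"
    by (subst add.commute, rule Henstock_Kurzweil_Integration.integral_combine) (use c0 int in auto)
  finally show ?thesis .
qed

lemma integral_cos_0_pi:
  assumes "j \<ge> 1"
  shows "integral {0..pi} (\<lambda>s. cos (real j * s)) = 0"
proof -
  have "((\<lambda>s. cos (real j * s)) has_integral (sin (real j * pi) / real j - sin (real j * 0) / real j)) {0..pi}"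
  proof (rule fundamental_theorem_of_calculus)
    show "0 \<le> pi" by simp
    fix x assume "x \<in> {0..pi}"
    show "((\<lambda>s. sin (real j * s) / real j) has_vector_derivative cos (real j * x)) (at x within {0..pi})"
      using assms by (auto intro!: derivative_eq_intros simp: has_real_derivative_iff_has_vector_derivative[symmetric])
  qed
  moreover have "sin (real j * pi) = 0" by (simp add: sin_npi)
  ultimately show ?thesis by (simp add: integral_unique)
qed

lemma integral_inv_sq:
  fixes u b :: real
  assumes "0 < u" "u \<le> b"
  shows "((\<lambda>t. 1 / t\<^sup>2) has_integral (1 / u - 1 / b)) {u..b}"
proof -
  have "((\<lambda>t. 1 / t\<^sup>2) has_integral ((\<lambda>t. - 1 / t) b - (\<lambda>t. - 1 / t) u)) {u..b}"
  proof (rule fundamental_theorem_of_calculus)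
    show "u \<le> b" by fact
    fix x assume x: "x \<in> {u..b}"
    hence "x \<noteq> 0" using assms by auto
    thus "((\<lambda>t. - 1 / t) has_vector_derivative 1 / x\<^sup>2) (at x within {u..b})"
      by (auto intro!: derivative_eq_intros simp: has_real_derivative_iff_has_vector_derivative[symmetric] power2_eq_square)
  qed
  thus ?thesis by simp
qed




definition dk :: "nat \<Rightarrow> real \<Rightarrow> real" where
  "dk k s = 1/2 + (\<Sum>j=1..k. cos (real j * s))"

lemma cos_per_nat: "cos (x + 2 * pi * real (j::nat)) = cos x"
  using periodic_int[of cos x "int j"] by simp

lemma dk_periodic: "dk k (y + 2 * pi) = dk k y"
proof -
  have "cos (real j * (y + 2 * pi)) = cos (real j * y)" for j
    using cos_per_nat[of "real j * y" j] by (simp add: algebra_simps)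
  thus ?thesis by (simp add: dk_def)
qed

lemma dk_even: "dk k (- s) = dk k s"
  by (simp add: dk_def)

lemma dk_cont: "continuous_on S (dk k)"
  unfolding dk_def by (intro continuous_intros)

lemma comp_cont: "continuous_on UNIV f \<Longrightarrow> continuous_on S g \<Longrightarrow> continuous_on S (\<lambda>s. f (g s))"
  by (rule continuous_on_compose2[of UNIV f S g]) auto

lemma dk_integral: "integral {0..pi} (dk k) = pi / 2"
proof -
  have "integral {0..pi} (dk k) = integral {0..pi} (\<lambda>s. 1/2) + integral {0..pi} (\<lambda>s. \<Sum>j=1..k. cos (real j * s))"
    unfolding dk_def
    by (rule integral_add) (auto intro!: integrable_continuous_interval continuous_intros)
  also have "integral {0..pi} (\<lambda>s. \<Sum>j=1..k. cos (real j * s)) = (\<Sum>j=1..k. integral {0..pi} (\<lambda>s. cos (real j * s)))"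
    by (rule integral_sum) (auto intro!: integrable_continuous_interval continuous_intros)
  also have "\<dots> = 0" by (simp add: integral_cos_0_pi)
  finally show ?thesis by simp
qed

lemma fps_integral:
  fixes f :: "real \<Rightarrow> real"
  assumes cont: "continuous_on UNIV f"
  shows "fourier_partial_sum f k x = (1/pi) * integral {-pi..pi} (\<lambda>t. f t * dk k (t - x))"
proof -
  have ci: "h integrable_on {-pi..pi}" if "continuous_on UNIV h" for h :: "real \<Rightarrow> real"
    by (rule integrable_continuous_interval) (rule continuous_on_subset[OF that], auto)
  have eq: "(\<lambda>t. f t * dk k (t - x)) = (\<lambda>t. f t / 2 + (\<Sum>j=1..k. cos (real j * x) * (f t * cos (real j * t)) + sin (real j * x) * (f t * sin (real j * t))))"
    by (rule ext) (simp add: dk_def sum_distrib_left distrib_left right_diff_distrib cos_diff algebra_simps)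
  have "integral {-pi..pi} (\<lambda>t. f t * dk k (t - x)) =
        integral {-pi..pi} (\<lambda>t. f t / 2) + integral {-pi..pi} (\<lambda>t. \<Sum>j=1..k. cos (real j * x) * (f t * cos (real j * t)) + sin (real j * x) * (f t * sin (real j * t)))"
    unfolding eq
    by (rule integral_add) (auto intro!: ci continuous_intros cont)
  also have "integral {-pi..pi} (\<lambda>t. \<Sum>j=1..k. cos (real j * x) * (f t * cos (real j * t)) + sin (real j * x) * (f t * sin (real j * t)))
      = (\<Sum>j=1..k. integral {-pi..pi} (\<lambda>t. cos (real j * x) * (f t * cos (real j * t)) + sin (real j * x) * (f t * sin (real j * t))))"
    by (rule integral_sum) (auto intro!: ci continuous_intros cont)
  also have "\<dots> = (\<Sum>j=1..k. cos (real j * x) * integral {-pi..pi} (\<lambda>t. f t * cos (real j * t)) + sin (real j * x) * integral {-pi..pi} (\<lambda>t. f t * sin (real j * t)))"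
    by (rule sum.cong[OF refl], subst integral_add) (auto intro!: ci continuous_intros cont)
  finally have "(1/pi) * integral {-pi..pi} (\<lambda>t. f t * dk k (t - x)) =
      (1/pi) * integral {-pi..pi} f / 2 + (\<Sum>j=1..k. cos (real j * x) * ((1/pi) * integral {-pi..pi} (\<lambda>t. f t * cos (real j * t))) + sin (real j * x) * ((1/pi) * integral {-pi..pi} (\<lambda>t. f t * sin (real j * t))))"
    by (simp add: distrib_left sum_distrib_left algebra_simps)
  thus ?thesis
    by (simp add: fourier_partial_sum_def fourier_a_def fourier_b_def algebra_simps)
qed




lemma cont_int:
  fixes h :: "real \<Rightarrow> real"
  shows "continuous_on UNIV h \<Longrightarrow> h integrable_on {a..b}"
  by (rule integrable_continuous_interval) (rule continuous_on_subset, auto)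

lemma fps_shift:
  fixes f :: "real \<Rightarrow> real"
  assumes cont: "continuous_on UNIV f" and per: "\<And>x. f (x + 2 * pi) = f x"
  shows "integral {-pi..pi} (\<lambda>t. f t * dk k (t - x)) = integral {-pi..pi} (\<lambda>s. f (x + s) * dk k s)"
proof -
  define g where "g t = f t * dk k (t - x)" for t
  have gc: "continuous_on UNIV g" unfolding g_def
    by (intro continuous_intros cont comp_cont[OF dk_cont])
  have gp: "g (t + 2 * pi) = g t" for t
    using per[of t] dk_periodic[of k "t - x"] by (simp add: g_def algebra_simps)
  from integral_periodic_shift[OF gc gp, of x]
  show ?thesis by (simp add: g_def)
qed

lemma fps_fold:
  fixes f :: "real \<Rightarrow> real"
  assumes cont: "continuous_on UNIV f"
  shows "integral {-pi..pi} (\<lambda>s. f (x + s) * dk k s) = integral {0..pi} (\<lambda>s. (f (x + s) + f (x - s)) * dk k s)"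
proof -
  define F where "F s = f (x + s) * dk k s" for s
  have Fc: "continuous_on UNIV F" unfolding F_def
    by (intro continuous_intros comp_cont[OF cont] dk_cont)
  have "integral {-pi..pi} F = integral {-pi..0} F + integral {0..pi} F"
    by (rule Henstock_Kurzweil_Integration.integral_combine[symmetric]) (auto intro: cont_int[OF Fc])
  also have "integral {-pi..0} F = integral {0..pi} (\<lambda>s. F (- s))"
    using Henstock_Kurzweil_Integration.integral_reflect_real[of pi 0 "\<lambda>s. F (- s)"] by simp
  also have "integral {0..pi} (\<lambda>s. F (- s)) + integral {0..pi} F = integral {0..pi} (\<lambda>s. F (- s) + F s)"
    by (rule integral_add[symmetric]) (auto intro!: cont_int continuous_intros Fc comp_cont[OF Fc])
  also have "(\<lambda>s. F (- s) + F s) = (\<lambda>s. (f (x + s) + f (x - s)) * dk k s)"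
    by (auto simp: F_def dk_even algebra_simps)
  finally show ?thesis by (simp add: F_def)
qed

lemma fps_minus:
  fixes f :: "real \<Rightarrow> real"
  assumes cont: "continuous_on UNIV f" and per: "\<And>x. f (x + 2 * pi) = f x"
  shows "fourier_partial_sum f k x - f x = (1/pi) * integral {0..pi} (\<lambda>s. (f (x + s) + f (x - s) - 2 * f x) * dk k s)"
proof -
  have "integral {0..pi} (\<lambda>s. (f (x + s) + f (x - s) - 2 * f x) * dk k s)
      = integral {0..pi} (\<lambda>s. (f (x + s) + f (x - s)) * dk k s - (2 * f x) * dk k s)"
    by (simp add: algebra_simps)
  also have "\<dots> = integral {0..pi} (\<lambda>s. (f (x + s) + f (x - s)) * dk k s) - integral {0..pi} (\<lambda>s. (2 * f x) * dk k s)"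
    by (rule integral_diff) (auto intro!: cont_int continuous_intros comp_cont[OF cont] dk_cont)
  also have "integral {0..pi} (\<lambda>s. (2 * f x) * dk k s) = 2 * f x * (pi / 2)"
    by (simp add: dk_integral)
  finally show ?thesis
    using fps_integral[OF cont, of k x] fps_shift[OF cont per, of k x] fps_fold[OF cont, of x k]
    by (simp add: field_simps)
qed

definition kn :: "(nat \<Rightarrow> nat \<Rightarrow> real) \<Rightarrow> nat \<Rightarrow> real \<Rightarrow> real" where
  "kn A n s = (\<Sum>k=0..n. A n k * dk k s)"

lemma mm_minus:
  fixes f :: "real \<Rightarrow> real"
  assumes cont: "continuous_on UNIV f" and per: "\<And>x. f (x + 2 * pi) = f x"
    and rowsum: "(\<Sum>k=0..n. A n k) = 1"
  shows "matrix_mean A f n x - f x = (1/pi) * integral {0..pi} (\<lambda>s. (f (x + s) + f (x - s) - 2 * f x) * kn A n s)"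
proof -
  define phi where "phi s = f (x + s) + f (x - s) - 2 * f x" for s
  have phic: "continuous_on UNIV phi" unfolding phi_def
    by (intro continuous_intros comp_cont[OF cont])
  have "matrix_mean A f n x - f x = (\<Sum>k=0..n. A n k * (fourier_partial_sum f k x - f x))"
    using rowsum by (simp add: matrix_mean_def right_diff_distrib sum_subtractf flip: sum_distrib_right)
  also have "\<dots> = (\<Sum>k=0..n. A n k * ((1/pi) * integral {0..pi} (\<lambda>s. phi s * dk k s)))"
    by (simp add: fps_minus[OF cont per] phi_def)
  also have "\<dots> = (1/pi) * (\<Sum>k=0..n. A n k * integral {0..pi} (\<lambda>s. phi s * dk k s))"
    by (simp add: sum_distrib_left mult.left_commute)
  also have "(\<Sum>k=0..n. A n k * integral {0..pi} (\<lambda>s. phi s * dk k s)) = (\<Sum>k=0..n. integral {0..pi} (\<lambda>s. A n k * (phi s * dk k s)))"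
    by (simp only: integral_mult_right[symmetric])
  also have "(\<Sum>k=0..n. integral {0..pi} (\<lambda>s. A n k * (phi s * dk k s))) = integral {0..pi} (\<lambda>s. \<Sum>k=0..n. A n k * (phi s * dk k s))"
    by (rule integral_sum[symmetric]) (auto intro!: cont_int continuous_intros phic dk_cont)
  also have "(\<lambda>s. \<Sum>k=0..n. A n k * (phi s * dk k s)) = (\<lambda>s. phi s * kn A n s)"
    by (auto simp: kn_def sum_distrib_left algebra_simps)
  finally show ?thesis by (simp add: phi_def)
qed




lemma dk_abs: "\<bar>dk k s\<bar> \<le> real k + 1"
proof -
  have "\<bar>dk k s\<bar> \<le> 1/2 + \<bar>\<Sum>j=1..k. cos (real j * s)\<bar>" unfolding dk_def by linarith
  also have "\<bar>\<Sum>j=1..k. cos (real j * s)\<bar> \<le> (\<Sum>j=1..k. \<bar>cos (real j * s)\<bar>)" by (rule sum_abs)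
  also have "\<dots> \<le> (\<Sum>j=1..k. 1)" by (rule sum_mono) simp
  finally show ?thesis by simp
qed

lemma kn_abs:
  assumes nonneg: "\<And>k. 0 \<le> A n k" and rowsum: "(\<Sum>k=0..n. A n k) = 1"
  shows "\<bar>kn A n s\<bar> \<le> real n + 1"
proof -
  have "\<bar>kn A n s\<bar> \<le> (\<Sum>k=0..n. \<bar>A n k * dk k s\<bar>)" unfolding kn_def by (rule sum_abs)
  also have "\<dots> \<le> (\<Sum>k=0..n. A n k * (real n + 1))"
  proof (rule sum_mono)
    fix k assume "k \<in> {0..n}"
    hence "\<bar>dk k s\<bar> \<le> real n + 1" using dk_abs[of k s] by auto
    thus "\<bar>A n k * dk k s\<bar> \<le> A n k * (real n + 1)"
      using nonneg[of k] by (simp add: abs_mult mult_left_mono)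
  qed
  also have "\<dots> = real n + 1" using rowsum by (simp flip: sum_distrib_right)
  finally show ?thesis .
qed

lemma dk_sin: "2 * sin (s/2) * dk k s = sin ((real k + 1/2) * s)"
proof (induction k)
  case 0 thus ?case by (simp add: dk_def)
next
  case (Suc k)
  have "dk (Suc k) s = dk k s + cos ((real k + 1) * s)"
    by (simp add: dk_def add.commute)
  moreover have "2 * sin (s/2) * cos ((real k + 1) * s) = sin ((real k + 1) * s + s/2) - sin ((real k + 1) * s - s/2)"
    by (simp add: sin_add sin_diff)
  moreover have "(real k + 1) * s + s/2 = (real (Suc k) + 1/2) * s" "(real k + 1) * s - s/2 = (real k + 1/2) * s"
    by (simp_all add: algebra_simps)
  ultimately show ?case using Suc by (simp add: algebra_simps)
qed

lemma sin_step: "2 * sin (s/2) * sin ((real i + 1/2) * s) = cos (real i * s) - cos ((real i + 1) * s)"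
proof -
  have "cos (real i * s) = cos ((real i + 1/2) * s - s/2)" "cos ((real i + 1) * s) = cos ((real i + 1/2) * s + s/2)"
    by (simp_all add: algebra_simps)
  thus ?thesis by (simp add: cos_add cos_diff)
qed

lemma sin_partial: "2 * sin (s/2) * (\<Sum>i\<le>j. sin ((real i + 1/2) * s)) = 1 - cos ((real j + 1) * s)"
proof (induction j)
  case 0 thus ?case using sin_step[of s 0] by simp
next
  case (Suc j)
  thus ?case using sin_step[of s "Suc j"] by (simp add: distrib_left algebra_simps)
qed

lemma abel:
  fixes b c :: "nat \<Rightarrow> real"
  shows "(\<Sum>k\<le>n. b k * c k) = (\<Sum>k<n. (b k - b (Suc k)) * (\<Sum>i\<le>k. c i)) + b n * (\<Sum>i\<le>n. c i)"
proof (induction n)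
  case 0 thus ?case by simp
next
  case (Suc n)
  thus ?case by (simp add: algebra_simps)
qed

lemma abel_mono:
  fixes w \<sigma> :: "nat \<Rightarrow> real"
  assumes w0: "\<And>i. 0 \<le> w i" and wm: "\<And>i. w i \<le> w (Suc i)"
    and S: "\<And>j. \<bar>\<Sum>i\<le>j. \<sigma> i\<bar> \<le> M"
  shows "\<bar>\<Sum>i\<le>k. w i * \<sigma> i\<bar> \<le> 2 * w k * M"
proof -
  have M0: "0 \<le> M" using S[of 0] by linarith
  have "\<bar>\<Sum>i\<le>k. w i * \<sigma> i\<bar> = \<bar>(\<Sum>i<k. (w i - w (Suc i)) * (\<Sum>j\<le>i. \<sigma> j)) + w k * (\<Sum>j\<le>k. \<sigma> j)\<bar>"
    by (simp add: abel)
  also have "\<dots> \<le> (\<Sum>i<k. \<bar>(w i - w (Suc i)) * (\<Sum>j\<le>i. \<sigma> j)\<bar>) + \<bar>w k * (\<Sum>j\<le>k. \<sigma> j)\<bar>"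
    by (rule order_trans[OF abs_triangle_ineq add_right_mono[OF sum_abs]])
  also have "\<dots> \<le> (\<Sum>i<k. (w (Suc i) - w i) * M) + w k * M"
  proof (rule add_mono)
    show "(\<Sum>i<k. \<bar>(w i - w (Suc i)) * (\<Sum>j\<le>i. \<sigma> j)\<bar>) \<le> (\<Sum>i<k. (w (Suc i) - w i) * M)"
    proof (rule sum_mono)
      fix i
      have "\<bar>w i - w (Suc i)\<bar> = w (Suc i) - w i" using wm[of i] by simp
      thus "\<bar>(w i - w (Suc i)) * (\<Sum>j\<le>i. \<sigma> j)\<bar> \<le> (w (Suc i) - w i) * M"
        using S[of i] wm[of i] by (simp add: abs_mult mult_left_mono)
    qed
    show "\<bar>w k * (\<Sum>j\<le>k. \<sigma> j)\<bar> \<le> w k * M"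
      using S[of k] w0[of k] by (simp add: abs_mult mult_left_mono)
  qed
  also have "(\<Sum>i<k. (w (Suc i) - w i) * M) = (w k - w 0) * M"
    by (simp add: sum_lessThan_telescope flip: sum_distrib_right)
  also have "(w k - w 0) * M + w k * M \<le> 2 * w k * M"
    using w0[of 0] M0 by (simp add: algebra_simps mult_left_mono)
  finally show ?thesis .
qed




lemma kn_bound:
  fixes A :: "nat \<Rightarrow> nat \<Rightarrow> real" and \<beta> C s :: real
  assumes beta: "0 \<le> \<beta>"
    and condn: "(\<Sum>k<n. (real k + 1) powr \<beta> *
           \<bar>A n k / (real k + 1) powr \<beta> - A n (Suc k) / (real k + 2) powr \<beta>\<bar>) \<le> C * A n n"
    and nn: "0 \<le> A n n"
    and s: "0 < s" "s \<le> pi"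
  shows "\<bar>kn A n s\<bar> \<le> (C + 1) * A n n / (sin (s/2))\<^sup>2"
proof -
  define sg where "sg = sin (s/2)"
  have sg0: "0 < sg" unfolding sg_def using s by (intro sin_gt_zero) auto
  define \<sigma> where "\<sigma> i = sin ((real i + 1/2) * s)" for i
  define M where "M = 1 / sg"
  have S: "\<bar>\<Sum>i\<le>j. \<sigma> i\<bar> \<le> M" for j
  proof -
    have "2 * sg * (\<Sum>i\<le>j. \<sigma> i) = 1 - cos ((real j + 1) * s)"
      unfolding sg_def \<sigma>_def by (rule sin_partial)
    moreover have "\<bar>1 - cos ((real j + 1) * s)\<bar> \<le> 2" using cos_ge_minus_one[of "(real j + 1) * s"] cos_le_one[of "(real j + 1) * s"] by linarith
    ultimately have "\<bar>2 * sg * (\<Sum>i\<le>j. \<sigma> i)\<bar> \<le> 2" by simp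
    hence "sg * \<bar>\<Sum>i\<le>j. \<sigma> i\<bar> \<le> 1" using sg0 by (simp add: abs_mult)
    thus ?thesis using sg0 by (simp add: M_def field_simps)
  qed
  define w where "w i = (real i + 1) powr \<beta>" for i
  have w0: "0 < w i" for i by (simp add: w_def)
  have wm: "w i \<le> w (Suc i)" for i unfolding w_def using beta by (intro powr_mono2) auto
  define b where "b k = A n k / w k" for k
  define c where "c k = w k * \<sigma> k" for k
  have Cb: "\<bar>\<Sum>i\<le>k. c i\<bar> \<le> 2 * w k * M" for k
    unfolding c_def by (rule abel_mono[where w=w and \<sigma>=\<sigma> and M=M, OF less_imp_le[OF w0] wm S])
  have bS: "b (Suc k) = A n (Suc k) / (real k + 2) powr \<beta>" for k
  proof -
    have "real (Suc k) + 1 = real k + 2" by simp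
    thus ?thesis by (simp add: b_def w_def add.commute)
  qed
  have bc: "b k * c k = A n k * \<sigma> k" for k using w0[of k] by (simp add: b_def c_def)
  have "2 * sg * kn A n s = (\<Sum>k=0..n. A n k * \<sigma> k)"
    unfolding kn_def sum_distrib_left
    by (rule sum.cong[OF refl]) (simp add: sg_def \<sigma>_def mult.left_commute dk_sin flip: mult.assoc)
  also have "\<dots> = (\<Sum>k\<le>n. b k * c k)"
    using bc by (simp add: atLeast0AtMost)
  also have "\<dots> = (\<Sum>k<n. (b k - b (Suc k)) * (\<Sum>i\<le>k. c i)) + b n * (\<Sum>i\<le>n. c i)"
    by (rule abel)
  finally have eq: "2 * sg * kn A n s = (\<Sum>k<n. (b k - b (Suc k)) * (\<Sum>i\<le>k. c i)) + b n * (\<Sum>i\<le>n. c i)" .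
  have "\<bar>2 * sg * kn A n s\<bar> \<le> (\<Sum>k<n. \<bar>(b k - b (Suc k)) * (\<Sum>i\<le>k. c i)\<bar>) + \<bar>b n * (\<Sum>i\<le>n. c i)\<bar>"
    unfolding eq by (rule order_trans[OF abs_triangle_ineq add_right_mono[OF sum_abs]])
  also have "\<dots> \<le> (\<Sum>k<n. \<bar>b k - b (Suc k)\<bar> * (2 * w k * M)) + b n * (2 * w n * M)"
  proof (rule add_mono)
    show "(\<Sum>k<n. \<bar>(b k - b (Suc k)) * (\<Sum>i\<le>k. c i)\<bar>) \<le> (\<Sum>k<n. \<bar>b k - b (Suc k)\<bar> * (2 * w k * M))"
      by (rule sum_mono) (simp add: abs_mult mult_left_mono Cb)
    have "0 \<le> b n" using nn w0[of n] by (simp add: b_def)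
    thus "\<bar>b n * (\<Sum>i\<le>n. c i)\<bar> \<le> b n * (2 * w n * M)"
      by (simp add: abs_mult mult_left_mono Cb)
  qed
  also have "\<dots> = 2 * M * ((\<Sum>k<n. w k * \<bar>b k - b (Suc k)\<bar>) + b n * w n)"
    by (simp add: sum_distrib_left sum_distrib_right algebra_simps)
  also have "(\<Sum>k<n. w k * \<bar>b k - b (Suc k)\<bar>) = (\<Sum>k<n. (real k + 1) powr \<beta> *
           \<bar>A n k / (real k + 1) powr \<beta> - A n (Suc k) / (real k + 2) powr \<beta>\<bar>)"
    by (simp add: bS) (simp add: b_def w_def)
  also have "b n * w n = A n n" using w0[of n] by (simp add: b_def)
  also have "2 * M * ((\<Sum>k<n. (real k + 1) powr \<beta> *
           \<bar>A n k / (real k + 1) powr \<beta> - A n (Suc k) / (real k + 2) powr \<beta>\<bar>) + A n n) \<le> 2 * M * (C * A n n + A n n)"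
    using condn sg0 by (intro mult_left_mono) (auto simp: M_def)
  finally have "2 * sg * \<bar>kn A n s\<bar> \<le> 2 * M * (C * A n n + A n n)"
    using sg0 by (simp add: abs_mult)
  hence "\<bar>kn A n s\<bar> \<le> M * (C * A n n + A n n) / sg" using sg0 by (simp add: field_simps)
  also have "M * (C * A n n + A n n) / sg = (C + 1) * A n n / sg\<^sup>2"
    by (simp add: M_def power2_eq_square field_simps)
  finally show ?thesis by (simp add: sg_def)
qed

lemma kn_bound2:
  fixes A :: "nat \<Rightarrow> nat \<Rightarrow> real" and \<beta> C s :: real
  assumes beta: "0 \<le> \<beta>"
    and condn: "(\<Sum>k<n. (real k + 1) powr \<beta> *
           \<bar>A n k / (real k + 1) powr \<beta> - A n (Suc k) / (real k + 2) powr \<beta>\<bar>) \<le> C * A n n"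
    and nn: "0 \<le> A n n" and C0: "0 \<le> C"
    and s: "0 < s" "s \<le> pi"
  shows "\<bar>kn A n s\<bar> \<le> 36 * (C + 1) * A n n / s\<^sup>2"
proof -
  have a: "s / 6 \<le> sin (s/2)" using sin_half_ge s by auto
  have s6: "0 < s / 6" using s by simp
  have "(s/6)\<^sup>2 \<le> (sin (s/2))\<^sup>2" using a s6 by (intro power_mono) auto
  moreover have sp: "0 < sin (s/2)" using a s6 by linarith
  ultimately have "(C + 1) * A n n / (sin (s/2))\<^sup>2 \<le> (C + 1) * A n n / (s/6)\<^sup>2"
    using s6 C0 nn by (intro divide_left_mono) auto
  also have "\<dots> = 36 * (C + 1) * A n n / s\<^sup>2" by (simp add: power2_eq_square field_simps)
  finally show ?thesis using kn_bound[where A=A and n=n and \<beta>=\<beta> and C=C and s=s, OF beta condn nn s] by linarith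
qed




lemma om_integrable:
  fixes f :: "real \<Rightarrow> real"
  assumes B: "\<And>x. \<bar>f x\<bar> \<le> B" and u: "0 < u"
  shows "(\<lambda>t. modulus_of_continuity f t / t\<^sup>2) integrable_on {u..b}"
proof -
  have mono: "mono_on {u..b} (modulus_of_continuity f)"
    by (rule mono_onI) (rule om_mono[OF B], use u in auto)
  have "modulus_of_continuity f integrable_on {u..b}"
    by (rule integrable_on_mono_on[OF mono])
  hence ai: "modulus_of_continuity f absolutely_integrable_on {u..b}"
    by (rule nonnegative_absolutely_integrable_1) (rule om_nonneg[OF B], use u in auto)
  have c: "continuous_on {u..b} (\<lambda>t::real. 1 / t\<^sup>2)"
    using u by (intro continuous_intros) auto
  have "(\<lambda>t. 1 / t\<^sup>2 * modulus_of_continuity f t) absolutely_integrable_on {u..b}"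
  proof (rule absolutely_integrable_bounded_measurable_product_real[OF _ _ _ ai])
    show "(\<lambda>t::real. 1 / t\<^sup>2) \<in> borel_measurable (lebesgue_on {u..b})"
      by (rule continuous_imp_measurable_on_sets_lebesgue[OF c]) auto
    show "{u..b} \<in> sets lebesgue" by auto
    show "bounded ((\<lambda>t::real. 1 / t\<^sup>2) ` {u..b})"
      by (rule compact_imp_bounded, rule compact_continuous_image[OF c]) auto
  qed
  hence "(\<lambda>t. 1 / t\<^sup>2 * modulus_of_continuity f t) integrable_on {u..b}"
    using absolutely_integrable_on_def by blast
  thus ?thesis by simp
qed

lemma kn_cont: "continuous_on S (kn A n)"
  unfolding kn_def by (intro continuous_intros dk_cont)

lemma main_bound:
  fixes f :: "real \<Rightarrow> real" and A :: "nat \<Rightarrow> nat \<Rightarrow> real" and \<beta> C :: real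
  assumes cont: "continuous_on UNIV f" and per: "\<And>x. f (x + 2 * pi) = f x"
    and B: "\<And>x. \<bar>f x\<bar> \<le> B"
    and nonneg: "\<And>k. 0 \<le> A n k" and rowsum: "(\<Sum>k=0..n. A n k) = 1"
    and beta: "0 \<le> \<beta>"
    and condn: "(\<Sum>k<n. (real k + 1) powr \<beta> *
           \<bar>A n k / (real k + 1) powr \<beta> - A n (Suc k) / (real k + 2) powr \<beta>\<bar>) \<le> C * A n n"
    and C0: "0 \<le> C"
  shows "\<bar>matrix_mean A f n x - f x\<bar> \<le> 2 * modulus_of_continuity f (pi / (real n + 1))
     + 72 * (C + 1) * A n n * integral {pi / (real n + 1)..pi} (\<lambda>t. modulus_of_continuity f t / t\<^sup>2)"
proof -
  define u where "u = pi / (real n + 1)"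
  have u0: "0 < u" and upi: "u \<le> pi" unfolding u_def by (auto simp: field_simps)
  define \<omega> where "\<omega> = modulus_of_continuity f"
  define I where "I = integral {u..pi} (\<lambda>t. \<omega> t / t\<^sup>2)"
  define phi where "phi s = f (x + s) + f (x - s) - 2 * f x" for s
  define G where "G s = phi s * kn A n s" for s
  have Gc: "continuous_on UNIV G" unfolding G_def phi_def
    by (intro continuous_intros comp_cont[OF cont] kn_cont)
  have phib: "\<bar>phi s\<bar> \<le> 2 * \<omega> d" if "0 \<le> s" "s \<le> d" for s d
  proof -
    have "\<bar>f (x + s) - f x\<bar> \<le> \<omega> d" unfolding \<omega>_def by (rule om_ge[where f=f, OF B]) (use that in auto)
    moreover have "\<bar>f (x + (- s)) - f x\<bar> \<le> \<omega> d" unfolding \<omega>_def by (rule om_ge[where f=f, OF B]) (use that in auto)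
    ultimately show ?thesis unfolding phi_def by auto
  qed
  have Ann: "0 \<le> A n n" by (rule nonneg)
  have Iint: "(\<lambda>t. \<omega> t / t\<^sup>2) integrable_on {u..pi}" unfolding \<omega>_def by (rule om_integrable[OF B u0])
  have I0: "0 \<le> I" unfolding I_def
    by (rule integral_nonneg[OF Iint]) (use om_nonneg[OF B] u0 in \<open>auto simp: \<omega>_def\<close>)
  have om0: "0 \<le> \<omega> u" unfolding \<omega>_def by (rule om_nonneg[OF B]) (use u0 in auto)
  have split: "integral {0..pi} G = integral {0..u} G + integral {u..pi} G"
    by (rule Henstock_Kurzweil_Integration.integral_combine[symmetric]) (use u0 upi in \<open>auto intro: cont_int[OF Gc]\<close>)
  have b1: "\<bar>integral {0..u} G\<bar> \<le> integral {0..u} (\<lambda>s. 2 * \<omega> u * (real n + 1))"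
  proof -
    have "norm (integral {0..u} G) \<le> integral {0..u} (\<lambda>s. 2 * \<omega> u * (real n + 1))"
    proof (rule integral_norm_bound_integral)
      show "G integrable_on {0..u}" by (rule cont_int[OF Gc])
      show "(\<lambda>s. 2 * \<omega> u * (real n + 1)) integrable_on {0..u}" by (intro cont_int continuous_intros)
      fix s assume s: "s \<in> {0..u}"
      have "\<bar>G s\<bar> = \<bar>phi s\<bar> * \<bar>kn A n s\<bar>" by (simp add: G_def abs_mult)
      also have "\<dots> \<le> (2 * \<omega> u) * (real n + 1)"
        by (rule mult_mono[OF phib kn_abs[where A=A and n=n, OF nonneg rowsum]]) (use s om0 in auto)
      finally show "norm (G s) \<le> 2 * \<omega> u * (real n + 1)" by simp
    qed
    thus ?thesis by simp
  qed
  have "integral {0..u} (\<lambda>s. 2 * \<omega> u * (real n + 1)) = u * (2 * \<omega> u * (real n + 1))"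
    using u0 by simp
  also have "\<dots> = 2 * pi * \<omega> u" unfolding u_def by (simp add: field_simps)
  finally have b1': "\<bar>integral {0..u} G\<bar> \<le> 2 * pi * \<omega> u" using b1 by linarith
  have b2: "\<bar>integral {u..pi} G\<bar> \<le> integral {u..pi} (\<lambda>s. 72 * (C + 1) * A n n * (\<omega> s / s\<^sup>2))"
  proof -
    have "norm (integral {u..pi} G) \<le> integral {u..pi} (\<lambda>s. 72 * (C + 1) * A n n * (\<omega> s / s\<^sup>2))"
    proof (rule integral_norm_bound_integral)
      show "G integrable_on {u..pi}" by (rule cont_int[OF Gc])
      show "(\<lambda>s. 72 * (C + 1) * A n n * (\<omega> s / s\<^sup>2)) integrable_on {u..pi}"
        by (rule integrable_on_mult_right[OF Iint])
      fix s assume s: "s \<in> {u..pi}"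
      hence s0: "0 < s" "s \<le> pi" using u0 by auto
      have "\<bar>G s\<bar> = \<bar>phi s\<bar> * \<bar>kn A n s\<bar>" by (simp add: G_def abs_mult)
      also have "\<dots> \<le> (2 * \<omega> s) * (36 * (C + 1) * A n n / s\<^sup>2)"
        by (rule mult_mono[OF phib kn_bound2[where A=A and n=n and \<beta>=\<beta> and C=C and s=s, OF beta condn Ann C0 s0]]) (use s0 om_nonneg[OF B, of s] in \<open>auto simp: \<omega>_def\<close>)
      also have "\<dots> = 72 * (C + 1) * A n n * (\<omega> s / s\<^sup>2)" by (simp add: field_simps)
      finally show "norm (G s) \<le> 72 * (C + 1) * A n n * (\<omega> s / s\<^sup>2)" by simp
    qed
    thus ?thesis by simp
  qed
  also have "integral {u..pi} (\<lambda>s. 72 * (C + 1) * A n n * (\<omega> s / s\<^sup>2)) = 72 * (C + 1) * A n n * I"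
    unfolding I_def by (rule integral_mult_right)
  finally have b2': "\<bar>integral {u..pi} G\<bar> \<le> 72 * (C + 1) * A n n * I" .
  have "matrix_mean A f n x - f x = (1/pi) * integral {0..pi} G"
  proof -
    have "G = (\<lambda>s. (f (x + s) + f (x - s) - 2 * f x) * kn A n s)" by (rule ext) (simp add: G_def phi_def)
    thus ?thesis using mm_minus[where f=f and A=A and n=n and x=x, OF cont per rowsum] by simp
  qed
  hence "\<bar>matrix_mean A f n x - f x\<bar> = \<bar>integral {0..pi} G\<bar> / pi" by (simp add: abs_mult)
  also have "\<dots> \<le> (2 * pi * \<omega> u + 72 * (C + 1) * A n n * I) / pi"
    using split b1' b2' by (intro divide_right_mono) auto
  also have "\<dots> = 2 * \<omega> u + 72 * (C + 1) * A n n * I / pi" by (simp add: field_simps)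
  also have "72 * (C + 1) * A n n * I / pi \<le> 72 * (C + 1) * A n n * I"
  proof -
    have "0 \<le> 72 * (C + 1) * A n n * I" using C0 Ann I0 by simp
    moreover have "1 \<le> pi" using pi_gt3 by linarith
    ultimately show ?thesis by (simp add: divide_le_eq mult_le_cancel_left1 mult_le_cancel_left2 mult_le_cancel_right2 mult_left_le)
  qed
  finally show ?thesis by (simp add: u_def \<omega>_def I_def)
qed




lemma ann_ge:
  fixes A :: "nat \<Rightarrow> nat \<Rightarrow> real" and \<beta> C :: real
  assumes beta: "0 \<le> \<beta>" and nonneg: "\<And>k. 0 \<le> A n k"
    and condn: "(\<Sum>k<n. (real k + 1) powr \<beta> *
           \<bar>A n k / (real k + 1) powr \<beta> - A n (Suc k) / (real k + 2) powr \<beta>\<bar>) \<le> C * A n n"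
    and kn: "k \<le> n"
  shows "A n k \<le> (1 + C) * A n n"
proof -
  define w where "w i = (real i + 1) powr \<beta>" for i
  have w0: "0 < w i" for i by (simp add: w_def)
  have w0': "0 \<le> w i" for i using w0[of i] by simp
  have wm: "i \<le> j \<Longrightarrow> w i \<le> w j" for i j unfolding w_def using beta by (intro powr_mono2) auto
  define b where "b k = A n k / w k" for k
  have bS: "b (Suc k) = A n (Suc k) / (real k + 2) powr \<beta>" for k
  proof -
    have "real (Suc k) + 1 = real k + 2" by simp
    thus ?thesis by (simp add: b_def w_def add.commute)
  qed
  have tel: "b k - b n = (\<Sum>j=k..<n. b j - b (Suc j))"
    using sum_Suc_diff'[OF kn, of "\<lambda>j. - b j"] by simp
  have "\<bar>b k - b n\<bar> \<le> (\<Sum>j=k..<n. \<bar>b j - b (Suc j)\<bar>)" unfolding tel by (rule sum_abs)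
  hence "w k * \<bar>b k - b n\<bar> \<le> w k * (\<Sum>j=k..<n. \<bar>b j - b (Suc j)\<bar>)"
    using w0[of k] by (intro mult_left_mono) auto
  also have "\<dots> = (\<Sum>j=k..<n. w k * \<bar>b j - b (Suc j)\<bar>)" by (simp add: sum_distrib_left)
  also have "\<dots> \<le> (\<Sum>j=k..<n. w j * \<bar>b j - b (Suc j)\<bar>)"
    by (rule sum_mono) (intro mult_right_mono wm, auto)
  also have "\<dots> \<le> (\<Sum>j<n. w j * \<bar>b j - b (Suc j)\<bar>)"
    by (rule sum_mono2) (auto intro!: mult_nonneg_nonneg w0')
  also have "(\<Sum>j<n. w j * \<bar>b j - b (Suc j)\<bar>) = (\<Sum>k<n. (real k + 1) powr \<beta> *
           \<bar>A n k / (real k + 1) powr \<beta> - A n (Suc k) / (real k + 2) powr \<beta>\<bar>)"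
    by (simp add: bS) (simp add: b_def w_def)
  finally have d: "w k * \<bar>b k - b n\<bar> \<le> C * A n n" using condn by linarith
  have "A n k = w k * b k" using w0[of k] by (simp add: b_def)
  also have "\<dots> \<le> w k * b n + w k * \<bar>b k - b n\<bar>"
    using w0[of k] by (simp add: flip: distrib_left)
  also have "w k * b n \<le> A n n"
  proof -
    have "w k * b n = (w k / w n) * A n n" by (simp add: b_def)
    also have "\<dots> \<le> 1 * A n n"
      using w0[of k] w0[of n] wm[OF kn] nonneg[of n] by (intro mult_right_mono) auto
    finally show ?thesis by simp
  qed
  finally show ?thesis using d by (simp add: algebra_simps)
qed

lemma ann_lower:
  fixes A :: "nat \<Rightarrow> nat \<Rightarrow> real" and \<beta> C :: real
  assumes beta: "0 \<le> \<beta>" and nonneg: "\<And>k. 0 \<le> A n k" and rowsum: "(\<Sum>k=0..n. A n k) = 1"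
    and condn: "(\<Sum>k<n. (real k + 1) powr \<beta> *
           \<bar>A n k / (real k + 1) powr \<beta> - A n (Suc k) / (real k + 2) powr \<beta>\<bar>) \<le> C * A n n"
  shows "1 \<le> (real n + 1) * ((1 + C) * A n n)"
proof -
  have "1 = (\<Sum>k=0..n. A n k)" using rowsum by simp
  also have "\<dots> \<le> (\<Sum>k=0..n. (1 + C) * A n n)"
    by (rule sum_mono) (rule ann_ge[where A=A and n=n and \<beta>=\<beta> and C=C, OF beta nonneg condn], auto)
  also have "\<dots> = (real n + 1) * ((1 + C) * A n n)" by simp
  finally show ?thesis .
qed





lemma sup_norm_le:
  assumes "\<And>x. \<bar>g x\<bar> \<le> M"
  shows "sup_norm g \<le> M"
  unfolding sup_norm_def by (rule cSUP_least) (use assms in auto)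

theorem theorem3p2:
  fixes f :: "real \<Rightarrow> real" and A :: "nat \<Rightarrow> nat \<Rightarrow> real"
    and \<beta> :: real and H :: "real \<Rightarrow> real"
  assumes cont: "continuous_on UNIV f"
    and periodic: "\<And>x. f (x + 2 * pi) = f x"
    and lower: "\<And>n k. n < k \<Longrightarrow> A n k = 0"
    and nonneg: "\<And>n k. 0 \<le> A n k"
    and rowsum: "\<And>n. (\<Sum>k=0..n. A n k) = 1"
    and beta: "0 \<le> \<beta>"
    and cond: "\<exists>C>0. \<forall>n m. m \<le> n \<longrightarrow>
        (\<Sum>k<m. (real k + 1) powr \<beta> *
           \<bar>A n k / (real k + 1) powr \<beta> - A n (Suc k) / (real k + 2) powr \<beta>\<bar>)
        \<le> C * A n m"
    and H_nonneg: "\<And>u. 0 \<le> u \<Longrightarrow> 0 \<le> H u"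
    and H_bound: "\<exists>C>0. \<forall>\<^sub>F u in at_right 0.
        integral {u..pi} (\<lambda>t. modulus_of_continuity f t / t\<^sup>2) \<le> C * H u"
  shows "(\<exists>C>0. \<forall>n. sup_norm (\<lambda>x. matrix_mean A f n x - f x)
            \<le> C * (modulus_of_continuity f (pi / (real n + 1))
                   + A n n * H (pi / (real n + 1))))
       \<and> ((\<exists>C>0. \<forall>\<^sub>F t in at_right 0.
              H integrable_on {0..t} \<and> integral {0..t} H \<le> C * (t * H t))
          \<longrightarrow> (\<exists>C>0. \<forall>\<^sub>F n in sequentially.
                 sup_norm (\<lambda>x. matrix_mean A f n x - f x)
                   \<le> C * (A n n * H (pi / (real n + 1)))))"
proof -
  obtain C where C0: "C > 0" and condC: "\<forall>n m. m \<le> n \<longrightarrow>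
        (\<Sum>k<m. (real k + 1) powr \<beta> *
           \<bar>A n k / (real k + 1) powr \<beta> - A n (Suc k) / (real k + 2) powr \<beta>\<bar>)
        \<le> C * A n m" using cond by blast
  have condn: "(\<Sum>k<n. (real k + 1) powr \<beta> *
           \<bar>A n k / (real k + 1) powr \<beta> - A n (Suc k) / (real k + 2) powr \<beta>\<bar>) \<le> C * A n n" for n
    using condC by blast
  obtain B where B: "\<And>x. \<bar>f x\<bar> \<le> B" using periodic_bounded[OF cont periodic] by blast
  define \<omega> where "\<omega> = modulus_of_continuity f"
  define I where "I v = integral {v..pi} (\<lambda>t. \<omega> t / t\<^sup>2)" for v
  define T where "T n = sup_norm (\<lambda>x. matrix_mean A f n x - f x)" for n
  define u where "u n = pi / (real n + 1)" for n
  have u0: "0 < u n" for n by (simp add: u_def)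
  have upi: "u n \<le> pi" for n by (simp add: u_def field_simps)
  have mb: "T n \<le> 2 * \<omega> (u n) + 72 * (C + 1) * A n n * I (u n)" for n
    unfolding T_def
    by (rule sup_norm_le, unfold \<omega>_def I_def u_def)
       (rule main_bound[where f=f and A=A and n=n and \<beta>=\<beta> and C=C, OF cont periodic B nonneg rowsum beta condn], use C0 in auto)
  have om0: "0 \<le> \<omega> v" if "0 \<le> v" for v unfolding \<omega>_def by (rule om_nonneg[OF B that])
  have Ann: "0 \<le> A n n" for n by (rule nonneg)
  have omu: "0 \<le> \<omega> (u n)" for n using om0[of "u n"] u0[of n] by simp
  have Ann1: "A n n \<le> 1" for n
  proof -
    have "A n n \<le> (\<Sum>k=0..n. A n k)" by (rule member_le_sum) (auto intro: nonneg)
    thus ?thesis using rowsum[of n] by simp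
  qed
  have Iint: "(\<lambda>t. \<omega> t / t\<^sup>2) integrable_on {u n..pi}" for n
    unfolding \<omega>_def by (rule om_integrable[OF B u0])
  have I0: "0 \<le> I (u n)" for n unfolding I_def
  proof (rule integral_nonneg[OF Iint])
    fix t assume t: "t \<in> {u n..pi}"
    hence "0 < t" using u0[of n] by auto
    thus "0 \<le> \<omega> t / t\<^sup>2" using om0[of t] by simp
  qed
  have Hu: "0 \<le> H (u n)" for n using u0[of n] H_nonneg by simp
  obtain CH where CH: "CH > 0" and ev: "\<forall>\<^sub>F v in at_right 0. I v \<le> CH * H v"
    using H_bound unfolding I_def \<omega>_def by blast
  then obtain d where d: "d > 0" and dI: "\<And>v. 0 < v \<Longrightarrow> v < d \<Longrightarrow> I v \<le> CH * H v"
    unfolding eventually_at_right_field by blast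
  define N where "N = nat (ceiling (pi / d))"
  have uN: "u n < d" if "N \<le> n" for n
  proof -
    have "pi / d \<le> real N" unfolding N_def by linarith
    also have "\<dots> \<le> real n" using that by simp
    finally have "pi / d < real n + 1" by linarith
    hence "pi < (real n + 1) * d" using d by (simp add: field_simps)
    thus ?thesis unfolding u_def using d by (simp add: field_simps)
  qed
  have small: "I (u n) \<le> real (N + 1) ^ 3 * \<omega> (u n)" if "n < N" for n
  proof -
    have "I (u n) \<le> integral {u n..pi} (\<lambda>t. \<omega> pi / (u n)\<^sup>2)"
      unfolding I_def
    proof (rule integral_le[OF Iint])
      show "(\<lambda>t. \<omega> pi / (u n)\<^sup>2) integrable_on {u n..pi}" by (intro cont_int continuous_intros)
      fix t assume t: "t \<in> {u n..pi}"
      hence t0: "0 < t" using u0[of n] by auto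
      have "\<omega> t \<le> \<omega> pi" unfolding \<omega>_def by (rule om_mono[OF B]) (use t t0 in auto)
      moreover have "1 / t\<^sup>2 \<le> 1 / (u n)\<^sup>2" using t u0[of n] by (intro divide_left_mono power_mono) auto
      moreover have "0 \<le> \<omega> t" using om0 t0 by simp
      ultimately have "\<omega> t * (1 / t\<^sup>2) \<le> \<omega> pi * (1 / (u n)\<^sup>2)"
        by (intro mult_mono) auto
      thus "\<omega> t / t\<^sup>2 \<le> \<omega> pi / (u n)\<^sup>2" by simp
    qed
    also have "\<dots> = (pi - u n) * (\<omega> pi / (u n)\<^sup>2)" using upi[of n] by simp
    also have "\<dots> \<le> pi * (\<omega> pi / (u n)\<^sup>2)"
      using u0[of n] om0[of pi] by (intro mult_right_mono) auto
    also have "\<omega> pi \<le> (real n + 1) * \<omega> (u n)"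
    proof -
      have "\<omega> (real (Suc n) * u n) \<le> real (Suc n) * \<omega> (u n)"
        unfolding \<omega>_def by (rule om_mult[OF B less_imp_le[OF u0]])
      moreover have "real (Suc n) * u n = pi" by (simp add: u_def field_simps)
      ultimately show ?thesis by (simp add: add.commute)
    qed
    hence "pi * (\<omega> pi / (u n)\<^sup>2) \<le> pi * ((real n + 1) * \<omega> (u n) / (u n)\<^sup>2)"
      by (intro mult_left_mono divide_right_mono) auto
    also have "\<dots> = (real n + 1) ^ 3 * \<omega> (u n) / pi"
      by (simp add: u_def power2_eq_square power3_eq_cube field_simps)
    also have "\<dots> \<le> (real n + 1) ^ 3 * \<omega> (u n)"
    proof -
      have "0 \<le> (real n + 1) ^ 3 * \<omega> (u n)" using omu[of n] by simp
      thus ?thesis using pi_gt3 by (simp add: divide_le_eq mult_le_cancel_left1 mult_le_cancel_left2 mult_le_cancel_right2 mult_left_le)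
    qed
    also have "\<dots> \<le> real (N + 1) ^ 3 * \<omega> (u n)"
      using that omu[of n] by (intro mult_right_mono power_mono) auto
    finally show ?thesis .
  qed
  define K where "K = 2 + 72 * (C + 1) * CH + 72 * (C + 1) * real (N + 1) ^ 3"
  have K0: "K > 0" unfolding K_def using C0 CH by (simp add: add_pos_nonneg)
  have part1: "T n \<le> K * (\<omega> (u n) + A n n * H (u n))" for n
  proof (cases "N \<le> n")
    case True
    have "I (u n) \<le> CH * H (u n)" by (rule dI[OF u0 uN[OF True]])
    hence "72 * (C + 1) * A n n * I (u n) \<le> 72 * (C + 1) * A n n * (CH * H (u n))"
      using C0 Ann[of n] by (intro mult_left_mono) auto
    hence "T n \<le> 2 * \<omega> (u n) + (72 * (C + 1) * CH) * (A n n * H (u n))"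
      using mb[of n] by (simp add: algebra_simps)
    also have "\<dots> \<le> K * \<omega> (u n) + K * (A n n * H (u n))"
    proof (rule add_mono)
      show "2 * \<omega> (u n) \<le> K * \<omega> (u n)"
        using om0[of "u n"] u0[of n] C0 CH unfolding K_def by (intro mult_right_mono) auto
      show "72 * (C + 1) * CH * (A n n * H (u n)) \<le> K * (A n n * H (u n))"
        using Ann[of n] Hu[of n] C0 CH unfolding K_def by (intro mult_right_mono) auto
    qed
    finally show ?thesis by (simp add: algebra_simps)
  next
    case False
    hence "I (u n) \<le> real (N + 1) ^ 3 * \<omega> (u n)" using small by simp
    hence "72 * (C + 1) * A n n * I (u n) \<le> 72 * (C + 1) * A n n * (real (N + 1) ^ 3 * \<omega> (u n))"
      using C0 Ann[of n] by (intro mult_left_mono) auto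
    also have "\<dots> \<le> 72 * (C + 1) * 1 * (real (N + 1) ^ 3 * \<omega> (u n))"
      using C0 Ann1[of n] om0[of "u n"] u0[of n] by (intro mult_right_mono mult_left_mono) auto
    finally have "T n \<le> (2 + 72 * (C + 1) * real (N + 1) ^ 3) * \<omega> (u n)"
      using mb[of n] by (simp add: algebra_simps)
    also have "\<dots> \<le> K * \<omega> (u n)"
      using om0[of "u n"] u0[of n] C0 CH unfolding K_def by (intro mult_right_mono) auto
    also have "\<dots> \<le> K * (\<omega> (u n) + A n n * H (u n))"
      using K0 Ann[of n] Hu[of n] by (intro mult_left_mono) auto
    finally show ?thesis .
  qed
  define K2 where "K2 = (4 * pi + 72) * (C + 1) * CH"
  have p72: "0 < 4 * pi + 72" using pi_gt_zero by linarith
  have K20: "K2 > 0" unfolding K2_def using C0 CH p72 by simp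
  have part2: "T n \<le> K2 * (A n n * H (u n))" if n: "max N 1 \<le> n" for n
  proof -
    have nN: "N \<le> n" and n1: "1 \<le> n" using n by auto
    have uhalf: "u n \<le> pi / 2" using n1 by (simp add: u_def field_simps)
    have "((\<lambda>t. \<omega> (u n) * (1 / t\<^sup>2)) has_integral (\<omega> (u n) * (1 / u n - 1 / pi))) {u n..pi}"
      by (rule has_integral_mult_right, rule integral_inv_sq[OF u0 upi])
    hence "\<omega> (u n) * (1 / u n - 1 / pi) \<le> I (u n)"
      unfolding I_def
    proof (rule has_integral_le[OF _ integrable_integral[OF Iint]])
      fix t assume t: "t \<in> {u n..pi}"
      have "\<omega> (u n) \<le> \<omega> t" unfolding \<omega>_def by (rule om_mono[OF B]) (use t u0[of n] in auto)
      thus "\<omega> (u n) * (1 / t\<^sup>2) \<le> \<omega> t / t\<^sup>2" by (simp add: divide_right_mono)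
    qed
    moreover have "1 / (2 * u n) \<le> 1 / u n - 1 / pi"
      using u0[of n] uhalf by (simp add: field_simps)
    ultimately have "\<omega> (u n) * (1 / (2 * u n)) \<le> I (u n)"
      using om0[of "u n"] u0[of n] by (meson less_imp_le mult_left_mono order_trans)
    hence omI: "\<omega> (u n) \<le> 2 * u n * I (u n)" using u0[of n] by (simp add: field_simps)
    have low: "1 \<le> (real n + 1) * ((1 + C) * A n n)"
      by (rule ann_lower[where A=A and n=n and \<beta>=\<beta> and C=C, OF beta nonneg rowsum condn])
    have "2 * u n * I (u n) = 2 * pi * I (u n) * (1 / (real n + 1))" by (simp add: u_def)
    also have "\<dots> \<le> 2 * pi * I (u n) * ((1 + C) * A n n)"
      using low I0[of n] by (intro mult_left_mono) (auto simp: field_simps)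
    finally have omA: "\<omega> (u n) \<le> 2 * pi * (1 + C) * (A n n * I (u n))" using omI by (simp add: algebra_simps)
    have "T n \<le> 2 * \<omega> (u n) + 72 * (C + 1) * (A n n * I (u n))"
      using mb[of n] by (simp add: algebra_simps)
    also have "\<dots> \<le> 2 * (2 * pi * (1 + C) * (A n n * I (u n))) + 72 * (C + 1) * (A n n * I (u n))"
      using omA by (simp add: algebra_simps)
    also have "\<dots> = (4 * pi + 72) * (C + 1) * (A n n * I (u n))" by (simp add: algebra_simps)
    also have "\<dots> \<le> (4 * pi + 72) * (C + 1) * (A n n * (CH * H (u n)))"
      using dI[OF u0 uN[OF nN]] Ann[of n] C0 by (intro mult_left_mono) auto
    also have "\<dots> = K2 * (A n n * H (u n))" by (simp add: K2_def algebra_simps)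
    finally show ?thesis .
  qed
  show ?thesis
  proof (intro conjI impI)
    show "\<exists>C>0. \<forall>n. sup_norm (\<lambda>x. matrix_mean A f n x - f x)
            \<le> C * (modulus_of_continuity f (pi / (real n + 1)) + A n n * H (pi / (real n + 1)))"
      using K0 part1 unfolding T_def \<omega>_def u_def by blast
    show "\<exists>C>0. \<forall>\<^sub>F n in sequentially. sup_norm (\<lambda>x. matrix_mean A f n x - f x)
                   \<le> C * (A n n * H (pi / (real n + 1)))"
      using K20 part2 unfolding T_def u_def eventually_sequentially by blast
  qed
qed


end
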